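(* Let $p\colon E\to B$ be an arc-hedgehog covering where $E$ and $B$ are Peano spaces. If $B$ is metrizable, then $E$ is metrizable.
   Context: All maps are continuous. A Peano space is a connected, locally path-connected space. For a class $\mathcal{P}$ of spaces, $p\colon E\to B$ is a $\mathcal{P}$-covering if for every $e_0\in E$, $X\in\mathcal{P}$, $x_0\in X$ and map $f\colon X\to B$ with $f(x_0)=p(e_0)$ there is a unique map $g\colon X\to E$ with $p\circ g=f$, $g(x_0)=e_0$. A directed wedge is $(Z,z_0)=\bigvee_{s\in S}(Z_s,z_s)$, a wedge of pointed Peano spaces indexed by a directed set $S$, topologized so that $U\subset Z\setminus\{z_0\}$ is open iff each $U\cap Z_s$ is open, and $U\ni z_0$ is an open neighborhood of $z_0$ iff each $U\cap Z_s$ is open and there is $t\in S$ with $Z_s\subset U$ for all $s>t$. An arc-hedgehog is a directed wedge with each $(Z_s,z_s)\cong([0,1],0)$; an arc-hedgehog covering is a $\mathcal{P}$-covering for $\mathcal{P}$ the class of all arc-hedgehogs. *)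

theory Defs
  imports "HOL-Analysis.Analysis"
begin

definition peano_space :: "'a topology \<Rightarrow> bool" where
  "peano_space X \<longleftrightarrow> connected_space X \<and> locally_path_connected_space X"

definition directed_set :: "'i set \<Rightarrow> ('i \<Rightarrow> 'i \<Rightarrow> bool) \<Rightarrow> bool" where
  "directed_set S le \<longleftrightarrow> S \<noteq> {} \<and> (\<forall>s\<in>S. le s s)
     \<and> (\<forall>r\<in>S. \<forall>s\<in>S. \<forall>t\<in>S. le r s \<longrightarrow> le s t \<longrightarrow> le r t)
     \<and> (\<forall>s\<in>S. \<forall>t\<in>S. \<exists>u\<in>S. le s u \<and> le t u)"

text \<open>Arc-hedgehog over index set S: the wedge of copies of ([0,1],0), one for each s in S.
  Points: the wedge point (None, 0) and (Some s, t) for s in S, 0 < t <= 1.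
  The spoke Z_s is identified with [0,1] via t \<mapsto> hedge_pt s t.\<close>
definition hedge_pt :: "'i \<Rightarrow> real \<Rightarrow> 'i option \<times> real" where
  "hedge_pt s t = (if t = 0 then (None, 0) else (Some s, t))"

definition hedge_carrier :: "'i set \<Rightarrow> ('i option \<times> real) set" where
  "hedge_carrier S = {(None, 0)} \<union> {hedge_pt s t | s t. s \<in> S \<and> t \<in> {0..1}}"

definition hedge_open :: "'i set \<Rightarrow> ('i \<Rightarrow> 'i \<Rightarrow> bool) \<Rightarrow> ('i option \<times> real) set \<Rightarrow> bool" where
  "hedge_open S le U \<longleftrightarrow> U \<subseteq> hedge_carrier S
     \<and> (\<forall>s\<in>S. openin (top_of_set {0..1::real}) {t \<in> {0..1}. hedge_pt s t \<in> U})
     \<and> ((None, 0) \<in> U \<longrightarrow>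
          (\<exists>t\<in>S. \<forall>s\<in>S. le t s \<longrightarrow> (\<forall>x\<in>{0..1}. hedge_pt s x \<in> U)))"

definition arc_hedgehog :: "'i set \<Rightarrow> ('i \<Rightarrow> 'i \<Rightarrow> bool) \<Rightarrow> ('i option \<times> real) topology" where
  "arc_hedgehog S le = topology (hedge_open S le)"

text \<open>P-covering, where P is the class of arc-hedgehogs whose index sets are subsets of the
  type 'i.\<close>
definition arc_hedgehog_covering_idx ::
  "'i itself \<Rightarrow> 'a topology \<Rightarrow> 'b topology \<Rightarrow> ('a \<Rightarrow> 'b) \<Rightarrow> bool" where
  "arc_hedgehog_covering_idx (_ :: 'i itself) E B p \<longleftrightarrow> continuous_map E B p \<and>
     (\<forall>e0\<in>topspace E. \<forall>(S :: 'i set) le. directed_set S le \<longrightarrow>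
        (\<forall>x0\<in>topspace (arc_hedgehog S le). \<forall>f.
           continuous_map (arc_hedgehog S le) B f \<and> f x0 = p e0 \<longrightarrow>
           (\<exists>g. continuous_map (arc_hedgehog S le) E g \<and>
                 (\<forall>x\<in>topspace (arc_hedgehog S le). p (g x) = f x) \<and> g x0 = e0 \<and>
                 (\<forall>g'. continuous_map (arc_hedgehog S le) E g' \<and>
                       (\<forall>x\<in>topspace (arc_hedgehog S le). p (g' x) = f x) \<and> g' x0 = e0
                       \<longrightarrow> (\<forall>x\<in>topspace (arc_hedgehog S le). g' x = g x)))))"

text \<open>Arc-hedgehog covering: index sets range over a universe of cardinality
  at least 2^(|E|+|B|).\<close>
definition arc_hedgehog_covering :: "'a topology \<Rightarrow> 'b topology \<Rightarrow> ('a \<Rightarrow> 'b) \<Rightarrow> bool" where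
  "arc_hedgehog_covering E B p \<longleftrightarrow> arc_hedgehog_covering_idx TYPE(('a + 'b) set) E B p"

lemma istopology_hedge_open:
  assumes d: "directed_set S le"
  shows "istopology (hedge_open S le)"
  unfolding istopology_def
proof safe
  fix U V assume U: "hedge_open S le U" and V: "hedge_open S le V"
  show "hedge_open S le (U \<inter> V)"
    unfolding hedge_open_def
  proof (intro conjI ballI impI)
    show "U \<inter> V \<subseteq> hedge_carrier S" using U unfolding hedge_open_def by blast
  next
    fix s assume "s \<in> S"
    then have "openin (top_of_set {0..1::real}) ({t \<in> {0..1}. hedge_pt s t \<in> U} \<inter> {t \<in> {0..1}. hedge_pt s t \<in> V})"
      using U V unfolding hedge_open_def by blast
    moreover have "{t \<in> {0..1}. hedge_pt s t \<in> U \<inter> V} = {t \<in> {0..1}. hedge_pt s t \<in> U} \<inter> {t \<in> {0..1}. hedge_pt s t \<in> V}" by auto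
    ultimately show "openin (top_of_set {0..1::real}) {t \<in> {0..1}. hedge_pt s t \<in> U \<inter> V}" by simp
  next
    assume "(None, 0) \<in> U \<inter> V"
    then obtain a b where a: "a \<in> S" "\<forall>s\<in>S. le a s \<longrightarrow> (\<forall>x\<in>{0..1}. hedge_pt s x \<in> U)"
      and b: "b \<in> S" "\<forall>s\<in>S. le b s \<longrightarrow> (\<forall>x\<in>{0..1}. hedge_pt s x \<in> V)"
      using U V unfolding hedge_open_def by blast
    obtain c where c: "c \<in> S" "le a c" "le b c" using d a b unfolding directed_set_def by blast
    show "\<exists>t\<in>S. \<forall>s\<in>S. le t s \<longrightarrow> (\<forall>x\<in>{0..1}. hedge_pt s x \<in> U \<inter> V)"
    proof (intro bexI[of _ c] ballI impI)
      fix s x assume s: "s \<in> S" "le c s" and x: "x \<in> {0..1::real}"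
      have tr: "\<And>r s t. r \<in> S \<Longrightarrow> s \<in> S \<Longrightarrow> t \<in> S \<Longrightarrow> le r s \<Longrightarrow> le s t \<Longrightarrow> le r t"
        using d unfolding directed_set_def by blast
      have "le a s" using tr[OF a(1) c(1) s(1) c(2) s(2)] .
      moreover have "le b s" using tr[OF b(1) c(1) s(1) c(3) s(2)] .
      ultimately show "hedge_pt s x \<in> U \<inter> V" using a b s x by blast
    qed (rule c(1))
  qed
next
  fix K assume K: "\<forall>U\<in>K. hedge_open S le U"
  show "hedge_open S le (\<Union>K)"
    unfolding hedge_open_def
  proof (intro conjI ballI impI)
    show "\<Union>K \<subseteq> hedge_carrier S" using K unfolding hedge_open_def by blast
  next
    fix s assume s: "s \<in> S"
    have "{t \<in> {0..1}. hedge_pt s t \<in> \<Union>K} = (\<Union>U\<in>K. {t \<in> {0..1}. hedge_pt s t \<in> U})" by auto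
    moreover have "openin (top_of_set {0..1::real}) (\<Union>U\<in>K. {t \<in> {0..1}. hedge_pt s t \<in> U})"
      using K s unfolding hedge_open_def by blast
    ultimately show "openin (top_of_set {0..1::real}) {t \<in> {0..1}. hedge_pt s t \<in> \<Union>K}" by simp
  next
    assume "(None, 0) \<in> \<Union>K"
    then obtain U where U: "U \<in> K" "(None,0) \<in> U" by blast
    then have "hedge_open S le U" using K by blast
    then obtain t where t: "t \<in> S" "\<forall>s\<in>S. le t s \<longrightarrow> (\<forall>x\<in>{0..1}. hedge_pt s x \<in> U)"
      using U(2) unfolding hedge_open_def by meson
    show "\<exists>t\<in>S. \<forall>s\<in>S. le t s \<longrightarrow> (\<forall>x\<in>{0..1}. hedge_pt s x \<in> \<Union>K)"
      using t U(1) by blast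
  qed
qed

end

theory Submission
  imports Defs
begin


lemma hedge_carrier_iff:
  "x \<in> hedge_carrier S \<longleftrightarrow> x = (None,0) \<or> (\<exists>s\<in>S. \<exists>t. 0 < t \<and> t \<le> 1 \<and> x = (Some s, t))"
proof
  assume "x \<in> hedge_carrier S"
  then show "x = (None,0) \<or> (\<exists>s\<in>S. \<exists>t. 0 < t \<and> t \<le> 1 \<and> x = (Some s, t))"
    unfolding hedge_carrier_def hedge_pt_def by (auto split: if_splits)
next
  assume "x = (None,0) \<or> (\<exists>s\<in>S. \<exists>t. 0 < t \<and> t \<le> 1 \<and> x = (Some s, t))"
  then show "x \<in> hedge_carrier S"
  proof
    assume "\<exists>s\<in>S. \<exists>t. 0 < t \<and> t \<le> 1 \<and> x = (Some s, t)"
    then obtain s t where "s \<in> S" "0 < t" "t \<le> 1" "x = (Some s, t)" by blast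
    then have "x = hedge_pt s t" "t \<in> {0..1}" by (auto simp: hedge_pt_def)
    then show ?thesis using \<open>s \<in> S\<close> unfolding hedge_carrier_def by blast
  qed (simp add: hedge_carrier_def)
qed

lemma hedge_pt_in: "s \<in> S \<Longrightarrow> t \<in> {0..1} \<Longrightarrow> hedge_pt s t \<in> hedge_carrier S"
  unfolding hedge_carrier_def by blast

lemma hedge_open_carrier:
  assumes "directed_set S le" shows "hedge_open S le (hedge_carrier S)"
proof -
  have "{t \<in> {0..1::real}. hedge_pt s t \<in> hedge_carrier S} = {0..1}" if "s \<in> S" for s
    using hedge_pt_in[OF that] by auto
  moreover obtain t where "t \<in> S" using assms unfolding directed_set_def by blast
  ultimately show ?thesis unfolding hedge_open_def
    by (auto intro: hedge_pt_in)
qed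

lemma openin_hedge:
  assumes "directed_set S le" shows "openin (arc_hedgehog S le) U \<longleftrightarrow> hedge_open S le U"
  unfolding arc_hedgehog_def using topology_inverse'[OF istopology_hedge_open[OF assms]] by simp

lemma topspace_hedge:
  assumes "directed_set S le" shows "topspace (arc_hedgehog S le) = hedge_carrier S"
  unfolding topspace_def openin_hedge[OF assms]
  using hedge_open_carrier[OF assms] unfolding hedge_open_def by blast

definition hmap :: "'x \<Rightarrow> ('i \<Rightarrow> real \<Rightarrow> 'x) \<Rightarrow> 'i option \<times> real \<Rightarrow> 'x" where
  "hmap e \<alpha> x = (case fst x of None \<Rightarrow> e | Some s \<Rightarrow> \<alpha> s (snd x))"

lemma hmap_base [simp]: "hmap e \<alpha> (None, 0) = e"
  by (simp add: hmap_def)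

lemma hmap_pt: "\<alpha> s 0 = e \<Longrightarrow> hmap e \<alpha> (hedge_pt s t) = \<alpha> s t"
  by (simp add: hmap_def hedge_pt_def)

lemma hedge_map_cont:
  assumes d: "directed_set S le"
    and P: "\<And>s. s \<in> S \<Longrightarrow> pathin X (\<alpha> s)"
    and Z: "\<And>s. s \<in> S \<Longrightarrow> \<alpha> s 0 = e"
    and e: "e \<in> topspace X"
    and conv: "\<And>W. openin X W \<Longrightarrow> e \<in> W \<Longrightarrow> \<exists>t\<in>S. \<forall>s\<in>S. le t s \<longrightarrow> (\<forall>x\<in>{0..1}. \<alpha> s x \<in> W)"
  shows "continuous_map (arc_hedgehog S le) X (hmap e \<alpha>)"
  unfolding continuous_map_def topspace_hedge[OF d] openin_hedge[OF d]
proof (intro conjI allI impI)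
  show "hmap e \<alpha> \<in> hedge_carrier S \<rightarrow> topspace X"
  proof
    fix x assume "x \<in> hedge_carrier S"
    then consider "x = (None,0)" | s t where "s \<in> S" "0 < t" "t \<le> 1" "x = (Some s, t)"
      unfolding hedge_carrier_iff by blast
    then show "hmap e \<alpha> x \<in> topspace X"
    proof cases
      case 1 then show ?thesis using e by simp
    next
      case 2
      then show ?thesis using P[OF 2(1)] unfolding pathin_def continuous_map_def
        by (auto simp: hmap_def)
    qed
  qed
next
  fix W assume W: "openin X W"
  let ?P = "{x \<in> hedge_carrier S. hmap e \<alpha> x \<in> W}"
  show "hedge_open S le ?P"
    unfolding hedge_open_def
  proof (intro conjI ballI impI)
    show "?P \<subseteq> hedge_carrier S" by blast
  next
    fix s assume s: "s \<in> S"
    have eq: "{t \<in> {0..1}. hedge_pt s t \<in> ?P} = {t \<in> topspace (top_of_set {0..1}). \<alpha> s t \<in> W}"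
      using hedge_pt_in[OF s] hmap_pt[of \<alpha> s e, OF Z[OF s]] by auto
    show "openin (top_of_set {0..1::real}) {t \<in> {0..1}. hedge_pt s t \<in> ?P}"
      unfolding eq using P[OF s] W unfolding pathin_def
      by (rule openin_continuous_map_preimage)
  next
    assume "(None, 0) \<in> ?P"
    then have "e \<in> W" by simp
    then obtain t where t: "t \<in> S" "\<forall>s\<in>S. le t s \<longrightarrow> (\<forall>x\<in>{0..1}. \<alpha> s x \<in> W)"
      using conv W by blast
    show "\<exists>t\<in>S. \<forall>s\<in>S. le t s \<longrightarrow> (\<forall>x\<in>{0..1}. hedge_pt s x \<in> ?P)"
    proof (intro bexI[OF _ t(1)] ballI impI)
      fix s x assume s: "s \<in> S" "le t s" and x: "x \<in> {0..1::real}"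
      have "hmap e \<alpha> (hedge_pt s x) = \<alpha> s x" by (rule hmap_pt[of \<alpha> s e x, OF Z[OF s(1)]])
      then show "hedge_pt s x \<in> ?P" using t(2) s x hedge_pt_in[OF s(1) x] by simp
    qed
  qed
qed

lemma spoke_cont:
  assumes d: "directed_set S le" and s: "s \<in> S"
  shows "continuous_map (top_of_set {0..1}) (arc_hedgehog S le) (hedge_pt s)"
  unfolding continuous_map_def topspace_hedge[OF d] openin_hedge[OF d]
  using hedge_pt_in[OF s] s by (auto simp: hedge_open_def)

lemma spoke_path:
  assumes d: "directed_set S le" and s: "s \<in> S"
    and g: "continuous_map (arc_hedgehog S le) X g"
  shows "pathin X (\<lambda>t. g (hedge_pt s t))"
  using continuous_map_compose[OF spoke_cont[OF d s] g] unfolding pathin_def o_def .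



lemma cov_cont: "arc_hedgehog_covering E B p \<Longrightarrow> continuous_map E B p"
  unfolding arc_hedgehog_covering_def arc_hedgehog_covering_idx_def by blast

lemma cov_lift:
  fixes E :: "'a topology" and B :: "'b topology" and S :: "('a+'b) set set"
  assumes "arc_hedgehog_covering E B p" "e0 \<in> topspace E" "directed_set S le"
    "x0 \<in> topspace (arc_hedgehog S le)" "continuous_map (arc_hedgehog S le) B f" "f x0 = p e0"
  shows "\<exists>g. continuous_map (arc_hedgehog S le) E g \<and>
                 (\<forall>x\<in>topspace (arc_hedgehog S le). p (g x) = f x) \<and> g x0 = e0 \<and>
                 (\<forall>g'. continuous_map (arc_hedgehog S le) E g' \<and>
                       (\<forall>x\<in>topspace (arc_hedgehog S le). p (g' x) = f x) \<and> g' x0 = e0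
                       \<longrightarrow> (\<forall>x\<in>topspace (arc_hedgehog S le). g' x = g x))"
  using assms unfolding arc_hedgehog_covering_def arc_hedgehog_covering_idx_def by blast

lemma upl:
  fixes E :: "'a topology" and B :: "'b topology"
  assumes cov: "arc_hedgehog_covering E B p"
    and b: "pathin E \<beta>" and c: "pathin E \<gamma>" and bc0: "\<beta> 0 = \<gamma> 0"
    and pp: "\<And>t. t \<in> {0..1} \<Longrightarrow> p (\<beta> t) = p (\<gamma> t)"
    and t: "t \<in> {0..1}"
  shows "\<beta> t = \<gamma> t"
proof -
  define S :: "('a+'b) set set" where "S = {{}, UNIV}"
  define le where "le = (\<lambda>a::('a+'b) set. \<lambda>b::('a+'b) set. a = {} \<or> b = UNIV)"
  have d: "directed_set S le" unfolding directed_set_def S_def le_def by auto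
  define e where "e = \<beta> 0"
  have e: "e \<in> topspace E" using b e_def path_start_in_topspace by blast
  define \<alpha>1 where "\<alpha>1 = (\<lambda>s::('a+'b) set. if s = {} then \<beta> else (\<lambda>_. e))"
  define \<alpha>2 where "\<alpha>2 = (\<lambda>s::('a+'b) set. if s = {} then \<gamma> else (\<lambda>_. e))"
  have conv: "\<exists>t\<in>S. \<forall>s\<in>S. le t s \<longrightarrow> (\<forall>x\<in>{0..1}. \<alpha> s x \<in> W)"
    if "e \<in> W" "\<And>x. \<alpha> UNIV x = e" for W and \<alpha> :: "('a+'b) set \<Rightarrow> real \<Rightarrow> 'a"
    using that unfolding S_def le_def by (intro bexI[of _ UNIV]) auto
  have c1: "continuous_map (arc_hedgehog S le) E (hmap e \<alpha>1)"
  proof (rule hedge_map_cont[OF d _ _ e])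
    fix s assume "s \<in> S" then show "pathin E (\<alpha>1 s)" using b e by (auto simp: \<alpha>1_def S_def)
  next
    fix s assume "s \<in> S" then show "\<alpha>1 s 0 = e" by (auto simp: \<alpha>1_def S_def e_def)
  next
    fix W assume "openin E W" "e \<in> W"
    then show "\<exists>t\<in>S. \<forall>s\<in>S. le t s \<longrightarrow> (\<forall>x\<in>{0..1}. \<alpha>1 s x \<in> W)"
      by (intro conv) (auto simp: \<alpha>1_def)
  qed
  have c2: "continuous_map (arc_hedgehog S le) E (hmap e \<alpha>2)"
  proof (rule hedge_map_cont[OF d _ _ e])
    fix s assume "s \<in> S" then show "pathin E (\<alpha>2 s)" using c e by (auto simp: \<alpha>2_def S_def)
  next
    fix s assume "s \<in> S" then show "\<alpha>2 s 0 = e" by (auto simp: \<alpha>2_def S_def e_def bc0)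
  next
    fix W assume "openin E W" "e \<in> W"
    then show "\<exists>t\<in>S. \<forall>s\<in>S. le t s \<longrightarrow> (\<forall>x\<in>{0..1}. \<alpha>2 s x \<in> W)"
      by (intro conv) (auto simp: \<alpha>2_def)
  qed
  define f where "f = p \<circ> hmap e \<alpha>1"
  have fc: "continuous_map (arc_hedgehog S le) B f"
    unfolding f_def using c1 cov_cont[OF cov] by (rule continuous_map_compose)
  have x0: "(None,0) \<in> topspace (arc_hedgehog S le)"
    unfolding topspace_hedge[OF d] hedge_carrier_def by blast
  obtain g where g: "\<forall>g'. continuous_map (arc_hedgehog S le) E g' \<and>
                       (\<forall>x\<in>topspace (arc_hedgehog S le). p (g' x) = f x) \<and> g' (None,0) = e
                       \<longrightarrow> (\<forall>x\<in>topspace (arc_hedgehog S le). g' x = g x)"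
    using cov_lift[OF cov e d x0 fc] unfolding f_def by auto
  have l2: "\<forall>x\<in>topspace (arc_hedgehog S le). p (hmap e \<alpha>2 x) = f x"
  proof
    fix x assume "x \<in> topspace (arc_hedgehog S le)"
    then consider "x = (None,0)" | s t where "s \<in> S" "0 < t" "t \<le> 1" "x = (Some s, t)"
      unfolding topspace_hedge[OF d] hedge_carrier_iff by blast
    then show "p (hmap e \<alpha>2 x) = f x"
      by cases (auto simp: f_def hmap_def \<alpha>1_def \<alpha>2_def pp)
  qed
  have "hmap e \<alpha>1 x = hmap e \<alpha>2 x" if "x \<in> topspace (arc_hedgehog S le)" for x
  proof -
    have "hmap e \<alpha>1 x = g x" using g c1 that by (simp add: f_def)
    moreover have "hmap e \<alpha>2 x = g x" using g c2 l2 that by simp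
    ultimately show ?thesis by simp
  qed
  moreover have "hedge_pt {} t \<in> topspace (arc_hedgehog S le)"
    unfolding topspace_hedge[OF d] using t by (intro hedge_pt_in) (auto simp: S_def)
  moreover have "hmap e \<alpha>1 (hedge_pt {} t) = \<beta> t"
    by (simp add: hmap_def hedge_pt_def \<alpha>1_def e_def)
  moreover have "hmap e \<alpha>2 (hedge_pt {} t) = \<gamma> t"
    by (simp add: hmap_def hedge_pt_def \<alpha>2_def e_def bc0)
  ultimately show ?thesis by metis
qed



lemma seq_conv:
  fixes E :: "'a topology" and B :: "'b topology" and A :: "nat \<Rightarrow> real \<Rightarrow> 'a"
  assumes cov: "arc_hedgehog_covering E B p" and H: "Hausdorff_space B"
    and x: "x \<in> topspace E"
    and P: "\<And>n. pathin E (A n)" and Z: "\<And>n. A n 0 = x"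
    and conv: "\<And>W. openin B W \<Longrightarrow> p x \<in> W \<Longrightarrow> \<exists>N. \<forall>n\<ge>N. \<forall>t\<in>{0..1}. p (A n t) \<in> W"
    and U: "openin E U" "x \<in> U"
  shows "\<exists>N. \<forall>n\<ge>N. \<forall>t\<in>{0..1}. A n t \<in> U"
proof (cases "finite (UNIV :: ('a+'b) set)")
  case True
  have "finite (range (Inr :: 'b \<Rightarrow> 'a + 'b))" by (rule finite_subset[OF subset_UNIV True])
  then have fb: "finite (UNIV :: 'b set)" by (rule finite_imageD) simp
  have px: "p x \<in> topspace B" using x cov_cont[OF cov] unfolding continuous_map_def by (metis funcset_mem)
  have "B = discrete_topology (topspace B)"
    using finite_t1_space_imp_discrete_topology[OF refl _ Hausdorff_imp_t1_space[OF H]]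
      finite_subset[OF subset_UNIV fb] by blast
  then have "openin B {p x}" using px
    by (metis discrete_topology_unique empty_subsetI insert_subset)
  then obtain N where N: "\<forall>n\<ge>N. \<forall>t\<in>{0..1}. p (A n t) \<in> {p x}" using conv by blast
  have "A n t = x" if "n \<ge> N" "t \<in> {0..1}" for n t
    using upl[OF cov P[of n], of "\<lambda>_. x"] x Z N that by auto
  then show ?thesis using U by blast
next
  case False
  then obtain c :: "nat \<Rightarrow> 'a + 'b" where c: "inj c"
    using infinite_countable_subset by blast
  define h where "h = (\<lambda>n. {c n})"
  have hinj: "inj h" using c unfolding h_def inj_def by auto
  define S where "S = range h"
  define le where "le = (\<lambda>a b. inv h a \<le> inv h b)"
  have ih: "inv h (h n) = n" for n using hinj by simp
  have d: "directed_set S le" unfolding directed_set_def S_def le_def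
    by (auto simp: ih) (metis ih max.cobounded1 max.cobounded2)
  define \<alpha> where "\<alpha> = (\<lambda>s t. p (A (inv h s) t))"
  have px: "p x \<in> topspace B" using x cov_cont[OF cov] unfolding continuous_map_def by (metis funcset_mem)
  have fc: "continuous_map (arc_hedgehog S le) B (hmap (p x) \<alpha>)"
  proof (rule hedge_map_cont[OF d _ _ px])
    fix s assume "s \<in> S" then show "pathin B (\<alpha> s)"
      unfolding \<alpha>_def using pathin_compose[OF P cov_cont[OF cov]] by (simp add: o_def)
  next
    fix s assume "s \<in> S" then show "\<alpha> s 0 = p x" by (simp add: \<alpha>_def Z)
  next
    fix W assume "openin B W" "p x \<in> W"
    then obtain N where N: "\<forall>n\<ge>N. \<forall>t\<in>{0..1}. p (A n t) \<in> W" using conv by blast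
    show "\<exists>t\<in>S. \<forall>s\<in>S. le t s \<longrightarrow> (\<forall>y\<in>{0..1}. \<alpha> s y \<in> W)"
      using N by (intro bexI[of _ "h N"]) (auto simp: S_def le_def ih \<alpha>_def)
  qed
  have x0: "(None,0) \<in> topspace (arc_hedgehog S le)"
    unfolding topspace_hedge[OF d] hedge_carrier_def by blast
  obtain g where gc: "continuous_map (arc_hedgehog S le) E g"
    and gl: "\<forall>y\<in>topspace (arc_hedgehog S le). p (g y) = hmap (p x) \<alpha> y"
    and g0: "g (None,0) = x"
    using cov_lift[OF cov x d x0 fc] by auto
  have gA: "g (hedge_pt (h n) t) = A n t" if t: "t \<in> {0..1}" for n t
  proof -
    have s: "h n \<in> S" by (simp add: S_def)
    have "A n t = g (hedge_pt (h n) t)"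
    proof (rule upl[OF cov P spoke_path[OF d s gc] _ _ t])
      show "A n 0 = g (hedge_pt (h n) 0)" by (simp add: Z hedge_pt_def g0)
    next
      fix u :: real assume u: "u \<in> {0..1}"
      have "p (g (hedge_pt (h n) u)) = hmap (p x) \<alpha> (hedge_pt (h n) u)"
        using gl hedge_pt_in[OF s u] topspace_hedge[OF d] by auto
      also have "\<dots> = p (A n u)"
        by (simp add: hmap_def hedge_pt_def \<alpha>_def ih Z)
      finally show "p (A n u) = p (g (hedge_pt (h n) u))" by simp
    qed
    then show ?thesis by simp
  qed
  have "openin (arc_hedgehog S le) {y \<in> topspace (arc_hedgehog S le). g y \<in> U}"
    using gc U(1) by (rule openin_continuous_map_preimage)
  then have "hedge_open S le {y \<in> topspace (arc_hedgehog S le). g y \<in> U}"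
    using openin_hedge[OF d] by blast
  moreover have "(None,0) \<in> {y \<in> topspace (arc_hedgehog S le). g y \<in> U}"
    using x0 g0 U(2) by simp
  ultimately obtain t where t: "t \<in> S"
    "\<forall>s\<in>S. le t s \<longrightarrow> (\<forall>y\<in>{0..1}. hedge_pt s y \<in> {y \<in> topspace (arc_hedgehog S le). g y \<in> U})"
    unfolding hedge_open_def by blast
  then obtain N where tN: "t = h N" by (auto simp: S_def)
  show ?thesis
  proof (intro exI[of _ N] allI impI ballI)
    fix n u assume "N \<le> n" "u \<in> {0..1::real}"
    then have "g (hedge_pt (h n) u) \<in> U" using t tN by (auto simp: S_def le_def ih)
    then show "A n u \<in> U" using gA[OF \<open>u \<in> _\<close>] by simp
  qed
qed



lemma pathin_reparam:
  assumes "pathin X \<alpha>" "continuous_on T \<phi>" "\<phi> ` T \<subseteq> {0..1}"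
  shows "continuous_map (top_of_set T) X (\<lambda>s. \<alpha> (\<phi> s))"
proof -
  have "continuous_map (top_of_set T) (top_of_set {0..1}) \<phi>"
    using assms(2,3) by (auto simp: continuous_map_in_subtopology)
  then show ?thesis using continuous_map_compose[of _ _ \<phi> X \<alpha>] assms(1)
    unfolding pathin_def o_def by blast
qed

definition jn :: "(real \<Rightarrow> 'a) \<Rightarrow> (real \<Rightarrow> 'a) \<Rightarrow> real \<Rightarrow> 'a" where
  "jn \<alpha> \<beta> s = (if s \<le> 1/2 then \<alpha> (2 * s) else \<beta> (2 * s - 1))"

lemma pathin_jn:
  assumes a: "pathin X \<alpha>" and b: "pathin X \<beta>" and ab: "\<alpha> 1 = \<beta> 0"
  shows "pathin X (jn \<alpha> \<beta>)"
  unfolding pathin_def jn_def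
proof (rule continuous_map_cases_le)
  show "continuous_map (top_of_set {0..1}) euclideanreal (\<lambda>x. x)" by simp
  show "continuous_map (top_of_set {0..1}) euclideanreal (\<lambda>x. 1/2)" by simp
  have eq1: "{x \<in> topspace (top_of_set {0..1::real}). x \<le> 1/2} = {0..1} \<inter> {x. x \<le> 1/2}" by auto
  have eq2: "{x \<in> topspace (top_of_set {0..1::real}). 1/2 \<le> x} = {0..1} \<inter> {x. 1/2 \<le> x}" by auto
  have "continuous_map (top_of_set ({0..1} \<inter> {x \<in> topspace (top_of_set {0..1}). x \<le> 1/2})) X (\<lambda>s. \<alpha> (2 * s))"
    by (rule pathin_reparam[OF a]) (force intro!: continuous_intros)+
  then show "continuous_map (subtopology (top_of_set {0..1}) {x \<in> topspace (top_of_set {0..1}). x \<le> 1/2}) X (\<lambda>s. \<alpha> (2 * s))"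
    by (simp only: subtopology_subtopology)
  have "continuous_map (top_of_set ({0..1} \<inter> {x \<in> topspace (top_of_set {0..1}). 1/2 \<le> x})) X (\<lambda>s. \<beta> (2 * s - 1))"
    by (rule pathin_reparam[OF b]) (force intro!: continuous_intros)+
  then show "continuous_map (subtopology (top_of_set {0..1}) {x \<in> topspace (top_of_set {0..1}). 1/2 \<le> x}) X (\<lambda>s. \<beta> (2 * s - 1))"
    by (simp only: subtopology_subtopology)
  fix x :: real assume "x = 1/2"
  then have "2 * x = 1" "2 * x - 1 = 0" by simp_all
  then show "\<alpha> (2 * x) = \<beta> (2 * x - 1)" using ab by simp
qed

lemma jn_cases:
  assumes "s \<in> {0..1}"
  shows "\<exists>u\<in>{0..1}. jn \<alpha> \<beta> s = \<alpha> u \<or> jn \<alpha> \<beta> s = \<beta> u"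
proof (cases "s \<le> 1/2")
  case True
  then show ?thesis using assms unfolding jn_def by (intro bexI[of _ "2 * s"]) auto
next
  case False
  then show ?thesis using assms unfolding jn_def by (intro bexI[of _ "2 * s - 1"]) auto
qed

lemma pathin_rev:
  assumes a: "pathin X \<alpha>" shows "pathin X (\<lambda>t. \<alpha> (1 - t))"
  unfolding pathin_def by (rule pathin_reparam[OF a]) (force intro!: continuous_intros)+

definition Rset :: "'a topology \<Rightarrow> ('a \<Rightarrow> 'b) \<Rightarrow> ('b \<Rightarrow> 'b \<Rightarrow> real) \<Rightarrow> 'a \<Rightarrow> 'a \<Rightarrow> real set" where
  "Rset E p d x y = {r. \<exists>\<alpha>. pathin E \<alpha> \<and> \<alpha> 0 = x \<and> \<alpha> 1 = y \<and>
       (\<forall>s\<in>{0..1}. \<forall>t\<in>{0..1}. d (p (\<alpha> s)) (p (\<alpha> t)) \<le> r)}"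

definition rho :: "'a topology \<Rightarrow> ('a \<Rightarrow> 'b) \<Rightarrow> ('b \<Rightarrow> 'b \<Rightarrow> real) \<Rightarrow> 'a \<Rightarrow> 'a \<Rightarrow> real" where
  "rho E p d x y = Inf (Rset E p d x y)"

context Metric_space
begin

lemma Rset_nonneg: "r \<in> Rset E p d x y \<Longrightarrow> 0 \<le> r"
proof -
  assume "r \<in> Rset E p d x y"
  then obtain \<alpha> where "\<forall>s\<in>{0..1::real}. \<forall>t\<in>{0..1}. d (p (\<alpha> s)) (p (\<alpha> t)) \<le> r"
    unfolding Rset_def by auto
  then have "d (p (\<alpha> 0)) (p (\<alpha> 0)) \<le> r" by auto
  then show ?thesis using nonneg order_trans by blast
qed

lemma Rset_bdd: "bdd_below (Rset E p d x y)"
  using Rset_nonneg by (meson bdd_below.I)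

lemma Rset_ne:
  assumes pc: "continuous_map E mtopology p" and E: "path_connected_space E"
    and x: "x \<in> topspace E" and y: "y \<in> topspace E"
  shows "Rset E p d x y \<noteq> {}"
proof -
  obtain \<alpha> where a: "pathin E \<alpha>" "\<alpha> 0 = x" "\<alpha> 1 = y"
    using E x y unfolding path_connected_space_def path_component_of_def by blast
  have "compactin mtopology ((p \<circ> \<alpha>) ` {0..1})"
    using compactin_path_image pathin_compose[OF a(1) pc] by blast
  then have "mbounded ((p \<circ> \<alpha>) ` {0..1})" by (rule compactin_imp_mbounded)
  then obtain C where "\<forall>u\<in>(p \<circ> \<alpha>) ` {0..1}. \<forall>v\<in>(p \<circ> \<alpha>) ` {0..1}. d u v \<le> C"
    unfolding mbounded_alt by blast
  then have "C \<in> Rset E p d x y" unfolding Rset_def using a by auto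
  then show ?thesis by blast
qed

lemma rho_le: "r \<in> Rset E p d x y \<Longrightarrow> rho E p d x y \<le> r"
  unfolding rho_def by (rule cInf_lower[OF _ Rset_bdd])

lemma rho_nonneg: "Rset E p d x y \<noteq> {} \<Longrightarrow> 0 \<le> rho E p d x y"
  unfolding rho_def using Rset_nonneg by (meson cInf_greatest)

lemma rho_lessD: "Rset E p d x y \<noteq> {} \<Longrightarrow> rho E p d x y < e \<Longrightarrow> \<exists>r\<in>Rset E p d x y. r < e"
  unfolding rho_def by (rule cInf_lessD)

lemma Rset_sym: "Rset E p d x y = Rset E p d y x"
proof -
  have *: "r \<in> Rset E p d y x" if rr: "r \<in> Rset E p d x y" for x y r
  proof -
    obtain \<alpha> where a: "pathin E \<alpha>" "\<alpha> 0 = x" "\<alpha> 1 = y"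
      "\<forall>s\<in>{0..1}. \<forall>t\<in>{0..1}. d (p (\<alpha> s)) (p (\<alpha> t)) \<le> r"
      using rr unfolding Rset_def by auto
    show ?thesis unfolding Rset_def
      using pathin_rev[OF a(1)] a(2-4) by (intro CollectI exI[of _ "\<lambda>t. \<alpha> (1 - t)"]) auto
  qed
  show ?thesis using * by blast
qed

lemma Rset_join:
  assumes pc: "continuous_map E mtopology p"
    and r1: "r1 \<in> Rset E p d x y" and r2: "r2 \<in> Rset E p d y z"
  shows "r1 + r2 \<in> Rset E p d x z"
proof -
  obtain \<alpha> where a: "pathin E \<alpha>" "\<alpha> 0 = x" "\<alpha> 1 = y"
      "\<forall>s\<in>{0..1}. \<forall>t\<in>{0..1}. d (p (\<alpha> s)) (p (\<alpha> t)) \<le> r1"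
      using r1 unfolding Rset_def by auto
  obtain \<beta> where b: "pathin E \<beta>" "\<beta> 0 = y" "\<beta> 1 = z"
      "\<forall>s\<in>{0..1}. \<forall>t\<in>{0..1}. d (p (\<beta> s)) (p (\<beta> t)) \<le> r2"
      using r2 unfolding Rset_def by auto
  have r1p: "0 \<le> r1" and r2p: "0 \<le> r2" using Rset_nonneg[OF r1] Rset_nonneg[OF r2] by auto
  have inM: "p (\<gamma> u) \<in> M" if "pathin E \<gamma>" "u \<in> {0..1}" for \<gamma> u
    using that pc unfolding pathin_def continuous_map_def by auto
  have key: "d (p u) (p v) \<le> r1 + r2"
    if u: "u \<in> \<alpha> ` {0..1} \<union> \<beta> ` {0..1}" and v: "v \<in> \<alpha> ` {0..1} \<union> \<beta> ` {0..1}" for u v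
  proof -
    have mix: "d (p (\<alpha> s)) (p (\<beta> t)) \<le> r1 + r2" if "s \<in> {0..1}" "t \<in> {0..1}" for s t
    proof -
      have "d (p (\<alpha> s)) (p (\<beta> t)) \<le> d (p (\<alpha> s)) (p (\<alpha> 1)) + d (p (\<beta> 0)) (p (\<beta> t))"
        using triangle[of "p (\<alpha> s)" "p (\<alpha> 1)" "p (\<beta> t)"] inM[OF a(1)] inM[OF b(1)] that a(3) b(2)
        by auto
      also have "\<dots> \<le> r1 + r2" using a(4) b(4) that by (intro add_mono) auto
      finally show ?thesis .
    qed
    from u obtain s where s: "s \<in> {0..1}" "u = \<alpha> s \<or> u = \<beta> s" by blast
    from v obtain t where t: "t \<in> {0..1}" "v = \<alpha> t \<or> v = \<beta> t" by blast
    have aa: "d (p (\<alpha> s)) (p (\<alpha> t)) \<le> r1" using a(4) s(1) t(1) by blast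
    have bb: "d (p (\<beta> s)) (p (\<beta> t)) \<le> r2" using b(4) s(1) t(1) by blast
    have ab: "d (p (\<alpha> s)) (p (\<beta> t)) \<le> r1 + r2" using mix s(1) t(1) by blast
    have ba: "d (p (\<beta> s)) (p (\<alpha> t)) \<le> r1 + r2" using mix[OF t(1) s(1)] commute by metis
    show ?thesis using s(2) t(2) aa bb ab ba r1p r2p by auto
  qed
  show ?thesis unfolding Rset_def
  proof (intro CollectI exI[of _ "jn \<alpha> \<beta>"] conjI ballI)
    show "pathin E (jn \<alpha> \<beta>)" using pathin_jn a b by metis
    show "jn \<alpha> \<beta> 0 = x" "jn \<alpha> \<beta> 1 = z" using a b by (auto simp: jn_def)
    fix s t :: real assume "s \<in> {0..1}" "t \<in> {0..1}"
    then show "d (p (jn \<alpha> \<beta> s)) (p (jn \<alpha> \<beta> t)) \<le> r1 + r2"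
      using jn_cases[of s \<alpha> \<beta>] jn_cases[of t \<alpha> \<beta>] key by (metis UnI1 UnI2 image_eqI)
  qed
qed

end



context Metric_space
begin

lemma claimA:
  fixes E :: "'x topology"
  assumes cov: "arc_hedgehog_covering E mtopology p" and x: "x \<in> topspace E"
    and U: "openin E U" "x \<in> U"
  shows "\<exists>\<epsilon>>0. \<forall>\<alpha>. pathin E \<alpha> \<and> \<alpha> 0 = x \<and> (\<forall>t\<in>{0..1}. d (p (\<alpha> t)) (p x) < \<epsilon>) \<longrightarrow> \<alpha> 1 \<in> U"
proof (rule ccontr)
  assume neg: "\<not> ?thesis"
  have "\<exists>\<alpha>. pathin E \<alpha> \<and> \<alpha> 0 = x \<and> (\<forall>t\<in>{0..1}. d (p (\<alpha> t)) (p x) < 1 / real (Suc n)) \<and> \<alpha> 1 \<notin> U" for n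
  proof -
    have "(0::real) < 1 / real (Suc n)" by simp
    then show ?thesis using neg by blast
  qed
  then obtain A where A: "\<And>n. pathin E (A n) \<and> A n 0 = x \<and> (\<forall>t\<in>{0..1}. d (p (A n t)) (p x) < 1 / real (Suc n)) \<and> A n 1 \<notin> U"
    by metis
  have pc: "continuous_map E mtopology p" using cov_cont[OF cov] .
  have inM: "p z \<in> M" if "z \<in> topspace E" for z
    using pc that unfolding continuous_map_def by auto
  have "\<exists>N. \<forall>n\<ge>N. \<forall>t\<in>{0..1}. A n t \<in> U"
  proof (rule seq_conv[OF cov Hausdorff_space_mtopology x _ _ _ U])
    show "pathin E (A n)" for n using A by blast
    show "A n 0 = x" for n using A by blast
    fix W assume W: "openin mtopology W" "p x \<in> W"
    then obtain r where r: "r > 0" "mball (p x) r \<subseteq> W" unfolding openin_mtopology by blast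
    obtain N where N: "inverse (real (Suc N)) < r" using reals_Archimedean[OF r(1)] by blast
    show "\<exists>N. \<forall>n\<ge>N. \<forall>t\<in>{0..1}. p (A n t) \<in> W"
    proof (intro exI[of _ N] allI impI ballI)
      fix n t assume n: "N \<le> n" and t: "t \<in> {0..1::real}"
      have "1 / real (Suc n) \<le> 1 / real (Suc N)" using n by (simp add: frac_le)
      moreover have "d (p (A n t)) (p x) < 1 / real (Suc n)" using A[of n] t by blast
      moreover have "1 / real (Suc N) < r" using N by (simp add: inverse_eq_divide)
      ultimately have "d (p (A n t)) (p x) < r" by linarith
      moreover have "A n t \<in> topspace E"
        using A[of n] t unfolding pathin_def continuous_map_def by (auto simp: Pi_iff)
      then have "p (A n t) \<in> M" by (rule inM)
      ultimately have "p (A n t) \<in> mball (p x) r" using inM[OF x] commute by auto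
      then show "p (A n t) \<in> W" using r by blast
    qed
  qed
  then obtain N where "\<forall>n\<ge>N. \<forall>t\<in>{0..1}. A n t \<in> U" by blast
  then have "A N 1 \<in> U" by auto
  then show False using A by blast
qed

lemma rho_zero_imp:
  fixes E :: "'x topology"
  assumes cov: "arc_hedgehog_covering E mtopology p" and pcE: "path_connected_space E"
    and x: "x \<in> topspace E" and y: "y \<in> topspace E" and z: "rho E p d x y = 0"
  shows "x = y"
proof -
  have pc: "continuous_map E mtopology p" using cov_cont[OF cov] .
  have inM: "p z \<in> M" if "z \<in> topspace E" for z
    using pc that unfolding continuous_map_def by auto
  have step: "\<forall>U. openin E U \<longrightarrow> a \<in> U \<longrightarrow> b \<in> U"
    if a: "a \<in> topspace E" and b: "b \<in> topspace E" and z: "rho E p d a b = 0" for a b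
  proof (intro allI impI)
    fix U assume U: "openin E U" "a \<in> U"
    obtain \<epsilon> where e: "\<epsilon> > 0"
      "\<forall>\<alpha>. pathin E \<alpha> \<and> \<alpha> 0 = a \<and> (\<forall>t\<in>{0..1}. d (p (\<alpha> t)) (p a) < \<epsilon>) \<longrightarrow> \<alpha> 1 \<in> U"
      using claimA[OF cov a U] by blast
    obtain r where r: "r \<in> Rset E p d a b" "r < \<epsilon>"
      using rho_lessD[OF Rset_ne[OF pc pcE a b]] z e(1) by auto
    then obtain \<alpha> where al: "pathin E \<alpha>" "\<alpha> 0 = a" "\<alpha> 1 = b"
      "\<forall>s\<in>{0..1}. \<forall>t\<in>{0..1}. d (p (\<alpha> s)) (p (\<alpha> t)) \<le> r"
      unfolding Rset_def by auto
    have "\<forall>t\<in>{0..1}. d (p (\<alpha> t)) (p a) < \<epsilon>"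
    proof
      fix t :: real assume t: "t \<in> {0..1}"
      have "d (p (\<alpha> t)) (p (\<alpha> 0)) \<le> r" using al(4) t by simp
      then show "d (p (\<alpha> t)) (p a) < \<epsilon>" using al(2) r(2) by simp
    qed
    then show "b \<in> U" using e(2) al by blast
  qed
  have xy: "\<forall>U. openin E U \<longrightarrow> x \<in> U \<longrightarrow> y \<in> U" using step[OF x y z] .
  have "rho E p d y x = 0" using z by (simp add: rho_def Rset_sym)
  then have yx: "\<forall>U. openin E U \<longrightarrow> y \<in> U \<longrightarrow> x \<in> U" using step[OF y x] by blast
  have pxy: "p x = p y"
  proof (rule ccontr)
    assume ne: "p x \<noteq> p y"
    define W where "W = mball (p x) (d (p x) (p y))"
    have "openin E {z \<in> topspace E. p z \<in> W}"
      using pc openin_mball unfolding W_def by (rule openin_continuous_map_preimage)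
    moreover have "x \<in> {z \<in> topspace E. p z \<in> W}"
      using x inM[OF x] inM[OF y] mdist_pos_less[OF ne] by (simp add: W_def)
    ultimately have "y \<in> {z \<in> topspace E. p z \<in> W}" using xy by blast
    then show False by (simp add: W_def)
  qed
  define \<beta> where "\<beta> = (\<lambda>t::real. if t = 0 then x else y)"
  have pb: "pathin E \<beta>"
    unfolding pathin_def continuous_map_def
  proof (intro conjI allI impI)
    show "\<beta> \<in> topspace (top_of_set {0..1}) \<rightarrow> topspace E" using x y by (auto simp: \<beta>_def)
    fix W assume W: "openin E W"
    show "openin (top_of_set {0..1}) {t \<in> topspace (top_of_set {0..1}). \<beta> t \<in> W}"
    proof (cases "x \<in> W")
      case True
      then have "y \<in> W" using xy W by blast
      then have "{t \<in> topspace (top_of_set {0..1}). \<beta> t \<in> W} = topspace (top_of_set {0..1::real})"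
        using True by (auto simp: \<beta>_def)
      then show ?thesis by (metis openin_topspace)
    next
      case False
      then have "y \<notin> W" using yx W by blast
      then have "{t \<in> topspace (top_of_set {0..1}). \<beta> t \<in> W} = {}"
        using False by (auto simp: \<beta>_def)
      then show ?thesis by (metis openin_empty)
    qed
  qed
  have "\<beta> 1 = x"
    by (rule upl[OF cov pb pathin_const[THEN iffD2, OF x]]) (auto simp: \<beta>_def pxy)
  then show ?thesis by (simp add: \<beta>_def)
qed

end



theorem proposition3p10:
  fixes E :: "'a topology" and B :: "'b topology" and p :: "'a \<Rightarrow> 'b"
  assumes "peano_space E" and "peano_space B"
    and "arc_hedgehog_covering E B p"
    and "metrizable_space B"
  shows "metrizable_space E"
proof -
  obtain M d where md: "Metric_space M d" and BM: "B = Metric_space.mtopology M d"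
    using assms(4) unfolding metrizable_space_def by blast
  interpret Metric_space M d by (rule md)
  have cov: "arc_hedgehog_covering E mtopology p" using assms(3) BM by simp
  have pc: "continuous_map E mtopology p" using cov_cont[OF cov] .
  have lpc: "locally_path_connected_space E" using assms(1) unfolding peano_space_def by blast
  have pcE: "path_connected_space E"
    using assms(1) path_connected_eq_connected_space[OF lpc] unfolding peano_space_def by blast
  have inM: "p z \<in> M" if "z \<in> topspace E" for z
    using pc that unfolding continuous_map_def by auto
  define r where "r = (\<lambda>x y. if x \<in> topspace E \<and> y \<in> topspace E then rho E p d x y else 0)"
  have ne: "Rset E p d x y \<noteq> {}" if "x \<in> topspace E" "y \<in> topspace E" for x y
    using Rset_ne[OF pc pcE that] .
  have rsym: "rho E p d x y = rho E p d y x" for x y by (simp add: rho_def Rset_sym)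
  have rxx: "rho E p d x x = 0" if x: "x \<in> topspace E" for x
  proof -
    have "0 \<in> Rset E p d x x" unfolding Rset_def
      using x inM[OF x] by (intro CollectI exI[of _ "\<lambda>_. x"]) auto
    then have "rho E p d x x \<le> 0" by (rule rho_le)
    moreover have "0 \<le> rho E p d x x" using rho_nonneg[OF ne[OF x x]] .
    ultimately show ?thesis by simp
  qed
  interpret R: Metric_space "topspace E" r
  proof
    show "0 \<le> r x y" for x y unfolding r_def using rho_nonneg[OF ne] by auto
    show "r x y = r y x" for x y unfolding r_def using rsym by auto
    show "r x y = 0 \<longleftrightarrow> x = y" if "x \<in> topspace E" "y \<in> topspace E" for x y
      unfolding r_def using that rxx rho_zero_imp[OF cov pcE that] by auto
    show "r x z \<le> r x y + r y z" if x: "x \<in> topspace E" and y: "y \<in> topspace E"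
      and z: "z \<in> topspace E" for x y z
    proof -
      have "rho E p d x z \<le> rho E p d x y + rho E p d y z + e" if e: "e > 0" for e
      proof -
        obtain r1 where r1: "r1 \<in> Rset E p d x y" "r1 < rho E p d x y + e/2"
          using rho_lessD[OF ne[OF x y]] e by (metis add.right_neutral add_strict_left_mono half_gt_zero)
        obtain r2 where r2: "r2 \<in> Rset E p d y z" "r2 < rho E p d y z + e/2"
          using rho_lessD[OF ne[OF y z]] e by (metis add.right_neutral add_strict_left_mono half_gt_zero)
        have "rho E p d x z \<le> r1 + r2" by (rule rho_le[OF Rset_join[OF pc r1(1) r2(1)]])
        then show ?thesis using r1(2) r2(2) by linarith
      qed
      then have "rho E p d x z \<le> rho E p d x y + rho E p d y z" by (rule field_le_epsilon)
      then show ?thesis unfolding r_def using x y z by simp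
    qed
  qed
  have "R.mtopology = E"
    unfolding topology_eq
  proof (intro allI iffI)
    fix U assume U: "openin R.mtopology U"
    have "\<exists>W. openin E W \<and> y \<in> W \<and> W \<subseteq> U" if y: "y \<in> U" for y
    proof -
      have yE: "y \<in> topspace E" using U y R.openin_mtopology by blast
      obtain \<epsilon> where e: "\<epsilon> > 0" "R.mball y \<epsilon> \<subseteq> U" using U y R.openin_mtopology by blast
      define V where "V = {z \<in> topspace E. p z \<in> mball (p y) (\<epsilon>/3)}"
      have V: "openin E V" unfolding V_def
        using pc openin_mball by (rule openin_continuous_map_preimage)
      define W where "W = path_component_of_set (subtopology E V) y"
      have yV: "y \<in> V" using yE inM[OF yE] e(1) by (simp add: V_def)
      have "W \<in> path_components_of (subtopology E V)"
        unfolding W_def path_components_of_def using yE yV by simp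
      then have Wo: "openin E W" using lpc V locally_path_connected_space_open_path_components by blast
      have yW: "y \<in> W" unfolding W_def using yE yV by (simp add: path_component_of_refl)
      have "W \<subseteq> U"
      proof
        fix z assume "z \<in> W"
        then obtain g where g: "pathin (subtopology E V) g" "g 0 = y" "g 1 = z"
          unfolding W_def path_component_of_def by blast
        then have gE: "pathin E g" and gV: "\<forall>t\<in>{0..1}. g t \<in> V"
          using pathin_subtopology by blast+
        have zE: "z \<in> topspace E" using path_finish_in_topspace[OF gE] g(3) by simp
        have "2 * \<epsilon> / 3 \<in> Rset E p d y z" unfolding Rset_def
        proof (intro CollectI exI[of _ g] conjI ballI)
          fix s t :: real assume s: "s \<in> {0..1}" and t: "t \<in> {0..1}"
          have gs: "p (g s) \<in> M" "d (p y) (p (g s)) < \<epsilon>/3" using gV s by (auto simp: V_def)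
          have gt: "p (g t) \<in> M" "d (p y) (p (g t)) < \<epsilon>/3" using gV t by (auto simp: V_def)
          have "d (p (g s)) (p (g t)) \<le> d (p (g s)) (p y) + d (p y) (p (g t))"
            using triangle gs(1) gt(1) inM[OF yE] by blast
          then show "d (p (g s)) (p (g t)) \<le> 2 * \<epsilon> / 3" using gs(2) gt(2) commute[of "p (g s)" "p y"] by linarith
        qed (use gE g in auto)
        then have "rho E p d y z \<le> 2 * \<epsilon> / 3" by (rule rho_le)
        then have "r y z < \<epsilon>" using e(1) yE zE by (simp add: r_def)
        then have "z \<in> R.mball y \<epsilon>" using yE zE by simp
        then show "z \<in> U" using e(2) by blast
      qed
      then show ?thesis using Wo yW by blast
    qed
    then show "openin E U" using openin_subopen by blast
  next
    fix U assume U: "openin E U"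
    show "openin R.mtopology U" unfolding R.openin_mtopology
    proof (intro conjI allI impI)
      show "U \<subseteq> topspace E" using U by (rule openin_subset)
      fix x assume x: "x \<in> U"
      have xE: "x \<in> topspace E" using U x openin_subset by blast
      obtain \<epsilon> where e: "\<epsilon> > 0"
        "\<forall>\<alpha>. pathin E \<alpha> \<and> \<alpha> 0 = x \<and> (\<forall>t\<in>{0..1}. d (p (\<alpha> t)) (p x) < \<epsilon>) \<longrightarrow> \<alpha> 1 \<in> U"
        using claimA[OF cov xE U x] by blast
      have "R.mball x \<epsilon> \<subseteq> U"
      proof
        fix y assume "y \<in> R.mball x \<epsilon>"
        then have yE: "y \<in> topspace E" and rl0: "r x y < \<epsilon>" by auto
        then have rl: "rho E p d x y < \<epsilon>" using xE by (simp add: r_def)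
        obtain r0 where r0: "r0 \<in> Rset E p d x y" "r0 < \<epsilon>" using rho_lessD[OF ne[OF xE yE] rl] by blast
        then obtain \<alpha> where al: "pathin E \<alpha>" "\<alpha> 0 = x" "\<alpha> 1 = y"
          "\<forall>s\<in>{0..1}. \<forall>t\<in>{0..1}. d (p (\<alpha> s)) (p (\<alpha> t)) \<le> r0"
          unfolding Rset_def by auto
        have "\<forall>t\<in>{0..1}. d (p (\<alpha> t)) (p x) < \<epsilon>"
        proof
          fix t :: real assume t: "t \<in> {0..1}"
          have "d (p (\<alpha> t)) (p (\<alpha> 0)) \<le> r0" using al(4) t by simp
          then show "d (p (\<alpha> t)) (p x) < \<epsilon>" using al(2) r0(2) by simp
        qed
        then show "y \<in> U" using e(2) al by blast
      qed
      then show "\<exists>r>0. R.mball x r \<subseteq> U" using e(1) by blast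
    qed
  qed
  then show ?thesis unfolding metrizable_space_def using R.Metric_space_axioms by metis
qed


end
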